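(* The typical subranks of real $4\times4\times4$ tensors are exactly $2$ and $3$.
   Context: For $r \geq 0$ let $I_r := \sum_{j=1}^r e_j \otimes e_j \otimes e_j$. The subrank of $T \in \mathbb{R}^{n_1} \otimes \mathbb{R}^{n_2} \otimes \mathbb{R}^{n_3}$ is $Q(T) := \max\{ r \mid \exists\ \mathbb{R}\text{-linear } \varphi_i : \mathbb{R}^{n_i} \to \mathbb{R}^r,\ (\varphi_1 \otimes \varphi_2 \otimes \varphi_3) T = I_r\}$. An integer $r$ is a typical subrank of the format $n_1\times n_2\times n_3$ if $\{T \mid Q(T) = r\}$ contains a nonempty Euclidean-open subset of $\mathbb{R}^{n_1} \otimes \mathbb{R}^{n_2} \otimes \mathbb{R}^{n_3}$. *)

theory Defs
  imports "HOL-Analysis.Analysis"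
begin

text \<open>A tensor in R^n1 (x) R^n2 (x) R^n3 is an element T of real^'k^'j^'i with
  coordinates T $ i $ j $ k, where the finite index types 'i, 'j, 'k have
  n1, n2, n3 elements.  An R-linear map R^{n1} -> R^r is given by its r x n1 matrix
  A, stored as a function A :: nat => 'i => real (rows indexed by a < r).\<close>

definition tensor_apply ::
  "(nat \<Rightarrow> 'i::finite \<Rightarrow> real) \<Rightarrow> (nat \<Rightarrow> 'j::finite \<Rightarrow> real) \<Rightarrow> (nat \<Rightarrow> 'k::finite \<Rightarrow> real)
     \<Rightarrow> real^'k^'j^'i \<Rightarrow> nat \<Rightarrow> nat \<Rightarrow> nat \<Rightarrow> real" where
  "tensor_apply A B C T a b c =
     (\<Sum>i\<in>UNIV. \<Sum>j\<in>UNIV. \<Sum>k\<in>UNIV. A a i * B b j * C c k * T $ i $ j $ k)"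

definition unit_tensor :: "nat \<Rightarrow> nat \<Rightarrow> nat \<Rightarrow> real" where
  "unit_tensor a b c = (if a = b \<and> b = c then 1 else 0)"

definition restricts_to_unit :: "real^'k::finite^'j::finite^'i::finite \<Rightarrow> nat \<Rightarrow> bool" where
  "restricts_to_unit T r \<longleftrightarrow>
     (\<exists>A B C. \<forall>a<r. \<forall>b<r. \<forall>c<r. tensor_apply A B C T a b c = unit_tensor a b c)"

definition subrank :: "real^'k::finite^'j::finite^'i::finite \<Rightarrow> nat" where
  "subrank T = Max {r. restricts_to_unit T r}"

definition typical_subrank :: "(real^'k::finite^'j::finite^'i::finite) itself \<Rightarrow> nat \<Rightarrow> bool" where
  "typical_subrank _ r \<longleftrightarrow>
     (\<exists>U :: (real^'k^'j^'i) set. open U \<and> U \<noteq> {} \<and> (\<forall>T\<in>U. subrank T = r))"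

end

theory Submission
  imports Defs "HOL-Computational_Algebra.Polynomial"
begin

definition rv :: "(nat \<Rightarrow> 'i::finite \<Rightarrow> real) \<Rightarrow> nat \<Rightarrow> real^'i" where
  "rv A a = (\<chi> i. A a i)"

definition mT :: "real^'k::finite^'j::finite^'i::finite \<Rightarrow> real^'i \<Rightarrow> real^'j \<Rightarrow> real^'k" where
  "mT T x y = (\<chi> k. \<Sum>i\<in>UNIV. \<Sum>j\<in>UNIV. x$i * y$j * T$i$j$k)"

lemma ta_eq: "tensor_apply A B C T a b c = mT T (rv A a) (rv B b) \<bullet> rv C c"
proof -
  have "mT T (rv A a) (rv B b) \<bullet> rv C c =
    (\<Sum>k\<in>UNIV. \<Sum>i\<in>UNIV. \<Sum>j\<in>UNIV. A a i * B b j * C c k * T$i$j$k)"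
    unfolding mT_def rv_def inner_vec_def
    by (simp add: sum_distrib_left mult.commute mult.left_commute)
  also have "\<dots> = (\<Sum>i\<in>UNIV. \<Sum>k\<in>UNIV. \<Sum>j\<in>UNIV. A a i * B b j * C c k * T$i$j$k)"
    by (rule sum.swap)
  also have "\<dots> = (\<Sum>i\<in>UNIV. \<Sum>j\<in>UNIV. \<Sum>k\<in>UNIV. A a i * B b j * C c k * T$i$j$k)"
    by (rule sum.cong[OF refl], rule sum.swap)
  finally show ?thesis unfolding tensor_apply_def by simp
qed

lemma mT_add_left: "mT T (x + x') y = mT T x y + mT T x' y"
  by (simp add: mT_def vec_eq_iff sum.distrib algebra_simps)
lemma mT_add_right: "mT T x (y + y') = mT T x y + mT T x y'"
  by (simp add: mT_def vec_eq_iff sum.distrib algebra_simps)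
lemma mT_scale_left: "mT T (c *\<^sub>R x) y = c *\<^sub>R mT T x y"
  by (simp add: mT_def vec_eq_iff sum_distrib_left algebra_simps)
lemma mT_scale_right: "mT T x (c *\<^sub>R y) = c *\<^sub>R mT T x y"
  by (simp add: mT_def vec_eq_iff sum_distrib_left algebra_simps)
lemma mT_zero_left[simp]: "mT T 0 y = 0" by (simp add: mT_def vec_eq_iff)
lemma mT_zero_right[simp]: "mT T x 0 = 0" by (simp add: mT_def vec_eq_iff)
lemma mT_sum_left: "finite S \<Longrightarrow> mT T (\<Sum>l\<in>S. f l) y = (\<Sum>l\<in>S. mT T (f l) y)"
  by (induction S rule: finite_induct) (auto simp: mT_add_left)
lemma mT_sum_right: "finite S \<Longrightarrow> mT T x (\<Sum>l\<in>S. f l) = (\<Sum>l\<in>S. mT T x (f l))"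
  by (induction S rule: finite_induct) (auto simp: mT_add_right)
lemma mT_add_T: "mT (T + T') x y = mT T x y + mT T' x y"
  by (simp add: mT_def vec_eq_iff sum.distrib algebra_simps)

lemma dep5:
  fixes v :: "nat \<Rightarrow> real^4"
  shows "\<exists>c. (\<exists>i<5. c i \<noteq> 0) \<and> (\<Sum>i<5. c i *\<^sub>R v i) = 0"
proof (cases "inj_on v {..<5}")
  case False
  then obtain i j where ij: "i < 5" "j < 5" "i \<noteq> j" "v i = v j"
    unfolding inj_on_def by auto
  define c where "c = (\<lambda>k. if k = i then 1 else if k = j then -1 else (0::real))"
  have "(\<Sum>k<5. c k *\<^sub>R v k) = (\<Sum>k\<in>{i,j}. c k *\<^sub>R v k)"
    by (rule sum.mono_neutral_right) (use ij in \<open>auto simp: c_def\<close>)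
  also have "\<dots> = 0" using ij by (simp add: c_def)
  finally show ?thesis using ij by (intro exI[of _ c]) (auto simp: c_def)
next
  case True
  let ?S = "v ` {..<5}"
  have cS: "card ?S = 5" using True by (simp add: card_image)
  have "dependent ?S"
    using independent_bound[of ?S] cS by auto
  then obtain T u where T: "finite T" "T \<subseteq> ?S" "(\<Sum>w\<in>T. u w *\<^sub>R w) = 0" "\<exists>w\<in>T. u w \<noteq> 0"
    unfolding dependent_explicit by auto
  define c where "c = (\<lambda>k. if v k \<in> T then u (v k) else 0)"
  have "(\<Sum>k<5. c k *\<^sub>R v k) = (\<Sum>w\<in>?S. (if w \<in> T then u w else 0) *\<^sub>R w)"
    using True by (simp add: sum.reindex c_def)
  also have "\<dots> = (\<Sum>w\<in>T. u w *\<^sub>R w)"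
    using T(2) by (simp add: sum.inter_restrict[symmetric] if_distrib[of "\<lambda>x. x *\<^sub>R _"] Int_absorb1 cong: if_cong)
  finally have s0: "(\<Sum>k<5. c k *\<^sub>R v k) = 0" using T(3) by simp
  from T(4) obtain w where w: "w \<in> T" "u w \<noteq> 0" by auto
  then obtain k where "k < 5" "v k = w" using T(2) by auto
  then have "c k \<noteq> 0" using w by (simp add: c_def)
  then show ?thesis using s0 \<open>k < 5\<close> by blast
qed

lemma sum5: "(\<Sum>i<(5::nat). f i) = f 0 + f 1 + f 2 + f 3 + (f 4 :: 'a::comm_monoid_add)"
  by (simp add: eval_nat_numeral add.assoc)
lemma sum4: "(\<Sum>i<(4::nat). f i) = f 0 + f 1 + f 2 + (f 3 :: 'a::comm_monoid_add)"
  by (simp add: eval_nat_numeral add.assoc)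

lemma dep5':
  fixes v0 v1 v2 v3 v4 :: "real^4"
  shows "\<exists>c0 c1 c2 c3 c4. (c0 \<noteq> 0 \<or> c1 \<noteq> 0 \<or> c2 \<noteq> 0 \<or> c3 \<noteq> 0 \<or> c4 \<noteq> 0) \<and>
     c0 *\<^sub>R v0 + c1 *\<^sub>R v1 + c2 *\<^sub>R v2 + c3 *\<^sub>R v3 + c4 *\<^sub>R v4 = 0"
proof -
  obtain c where c: "\<exists>i<5. c i \<noteq> 0" "(\<Sum>i<5. c i *\<^sub>R ([v0,v1,v2,v3,v4] ! i)) = 0"
    using dep5[of "\<lambda>i. [v0,v1,v2,v3,v4] ! i"] by blast
  from c(1) have "c 0 \<noteq> 0 \<or> c 1 \<noteq> 0 \<or> c 2 \<noteq> 0 \<or> c 3 \<noteq> 0 \<or> c 4 \<noteq> 0"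
    by (auto simp: eval_nat_numeral less_Suc_eq)
  moreover from c(2) have "c 0 *\<^sub>R v0 + c 1 *\<^sub>R v1 + c 2 *\<^sub>R v2 + c 3 *\<^sub>R v3 + c 4 *\<^sub>R v4 = 0"
    by (simp add: sum5 numeral_eq_Suc)
  ultimately show ?thesis by blast
qed

definition restr_rel :: "real^'k::finite^'j::finite^'i::finite \<Rightarrow> nat \<Rightarrow> _" where
  "restr_rel T r A B C \<longleftrightarrow> (\<forall>a<r. \<forall>b<r. \<forall>c<r. tensor_apply A B C T a b c = unit_tensor a b c)"

lemma restricts_def': "restricts_to_unit T r \<longleftrightarrow> (\<exists>A B C. restr_rel T r A B C)"
  unfolding restricts_to_unit_def restr_rel_def ..

lemma restr_rel_m: "restr_rel T r A B C \<Longrightarrow> a < r \<Longrightarrow> b < r \<Longrightarrow> c < r \<Longrightarrow>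
    mT T (rv A a) (rv B b) \<bullet> rv C c = (if a = b \<and> b = c then 1 else 0)"
  unfolding restr_rel_def by (simp add: ta_eq[symmetric] unit_tensor_def)

lemma restricts_mono: "restricts_to_unit T r \<Longrightarrow> r' \<le> r \<Longrightarrow> restricts_to_unit T r'"
  unfolding restricts_to_unit_def by (meson less_le_trans)

lemma restricts_0: "restricts_to_unit T 0"
  unfolding restricts_to_unit_def by simp

lemma restricts_le4:
  fixes T :: "real^4^'j::finite^'i::finite"
  assumes "restricts_to_unit T r" shows "r \<le> 4"
proof (rule ccontr)
  assume "\<not> r \<le> 4"
  then have "restricts_to_unit T 5" using assms restricts_mono[of T r 5] by simp
  then obtain A B C where R: "restr_rel T 5 A B C" unfolding restricts_def' by blast
  define w where "w c = mT T (rv A c) (rv B c)" for c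
  obtain g where g: "\<exists>i<5. g i \<noteq> 0" "(\<Sum>i<5. g i *\<^sub>R w i) = 0"
    using dep5[of w] by blast
  have "g d = 0" if "d < 5" for d
  proof -
    have "0 = (\<Sum>i<5. g i *\<^sub>R w i) \<bullet> rv C d" using g(2) by simp
    also have "\<dots> = (\<Sum>i<5. g i * (w i \<bullet> rv C d))" by (simp add: inner_sum_left)
    also have "\<dots> = (\<Sum>i<5. if i = d then g i else 0)"
      by (rule sum.cong) (use R that in \<open>auto simp: w_def restr_rel_m\<close>)
    also have "\<dots> = g d" using that by simp
    finally show ?thesis by simp
  qed
  then show False using g(1) by blast
qed

lemma finite_restricts:
  fixes T :: "real^4^'j::finite^'i::finite"
  shows "finite {r. restricts_to_unit T r}"
  by (rule finite_subset[of _ "{..4}"]) (auto dest: restricts_le4)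

lemma subrank_eqI:
  fixes T :: "real^4^'j::finite^'i::finite"
  assumes "restricts_to_unit T r" "\<not> restricts_to_unit T (Suc r)"
  shows "subrank T = r"
proof -
  have "{r. restricts_to_unit T r} = {..r}"
    using assms restricts_mono by (auto, meson not_less_eq_eq restricts_mono)
  then show ?thesis unfolding subrank_def by (simp, intro Max_eqI) auto
qed

lemma subrank_ge:
  fixes T :: "real^4^'j::finite^'i::finite"
  assumes "restricts_to_unit T r" shows "r \<le> subrank T"
  unfolding subrank_def using assms finite_restricts[of T] by (intro Max_ge) auto

lemma subrank_restricts:
  fixes T :: "real^4^'j::finite^'i::finite"
  shows "restricts_to_unit T (subrank T)"
proof -
  have "subrank T \<in> {r. restricts_to_unit T r}"
    unfolding subrank_def using finite_restricts[of T] restricts_0[of T]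
    by (intro Max_in) auto
  then show ?thesis by simp
qed


lemma linear_phi: "linear (\<lambda>u. mT T u y \<bullet> z)"
  by (rule linearI) (simp_all add: mT_add_left mT_scale_left inner_add_left)
lemma linear_psi: "linear (\<lambda>u. v \<bullet> (u::real^'n))"
  by (rule linearI) (simp_all add: inner_add_right)

lemma span4:
  fixes v :: "nat \<Rightarrow> real^4" and f :: "nat \<Rightarrow> real^4 \<Rightarrow> real"
  assumes lin: "\<And>b. linear (f b)"
    and d: "\<And>a b. a < 4 \<Longrightarrow> b < 4 \<Longrightarrow> f b (v a) = (if a = b then 1 else 0)"
  shows "u = (\<Sum>a<4. f a u *\<^sub>R v a)"
proof -
  obtain c0 c1 c2 c3 c4 where c: "c0 \<noteq> 0 \<or> c1 \<noteq> 0 \<or> c2 \<noteq> 0 \<or> c3 \<noteq> 0 \<or> c4 \<noteq> 0"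
    "c0 *\<^sub>R v 0 + c1 *\<^sub>R v 1 + c2 *\<^sub>R v 2 + c3 *\<^sub>R v 3 + c4 *\<^sub>R u = 0"
    using dep5'[of "v 0" "v 1" "v 2" "v 3" u] by blast
  have fb: "c0 * f b (v 0) + c1 * f b (v 1) + c2 * f b (v 2) + c3 * f b (v 3) + c4 * f b u = 0" for b
  proof -
    have "f b (c0 *\<^sub>R v 0 + c1 *\<^sub>R v 1 + c2 *\<^sub>R v 2 + c3 *\<^sub>R v 3 + c4 *\<^sub>R u) = 0"
      using c(2) linear_0[OF lin] by simp
    then show ?thesis using lin[of b] by (simp add: linear_add linear_scale)
  qed
  have c4: "c4 \<noteq> 0"
  proof
    assume "c4 = 0"
    then have "c0 = 0" "c1 = 0" "c2 = 0" "c3 = 0"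
      using fb[of 0] fb[of 1] fb[of 2] fb[of 3] by (simp_all add: d)
    then show False using c(1) \<open>c4 = 0\<close> by simp
  qed
  have "c4 * f 0 u = - c0" using fb[of 0] by (simp add: d)
  then have f0: "f 0 u = - c0 / c4" using c4 by (simp add: field_simps mult.commute)
  have "c4 * f 1 u = - c1" using fb[of 1] by (simp add: d)
  then have f1: "f 1 u = - c1 / c4" using c4 by (simp add: field_simps mult.commute)
  have "c4 * f 2 u = - c2" using fb[of 2] by (simp add: d)
  then have f2: "f 2 u = - c2 / c4" using c4 by (simp add: field_simps mult.commute)
  have "c4 * f 3 u = - c3" using fb[of 3] by (simp add: d)
  then have f3: "f 3 u = - c3 / c4" using c4 by (simp add: field_simps mult.commute)
  have "c4 *\<^sub>R u = - (c0 *\<^sub>R v 0 + c1 *\<^sub>R v 1 + c2 *\<^sub>R v 2 + c3 *\<^sub>R v 3)"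
    using minus_unique[OF c(2)] by simp
  then have "(1/c4) *\<^sub>R (c4 *\<^sub>R u) = (1/c4) *\<^sub>R (- (c0 *\<^sub>R v 0 + c1 *\<^sub>R v 1 + c2 *\<^sub>R v 2 + c3 *\<^sub>R v 3))"
    by simp
  then have ueq: "u = (1/c4) *\<^sub>R (- (c0 *\<^sub>R v 0 + c1 *\<^sub>R v 1 + c2 *\<^sub>R v 2 + c3 *\<^sub>R v 3))"
    using c4 by simp
  have "(\<Sum>a<4. f a u *\<^sub>R v a) = (-c0/c4) *\<^sub>R v 0 + (-c1/c4) *\<^sub>R v 1 + (-c2/c4) *\<^sub>R v 2 + (-c3/c4) *\<^sub>R v 3"
    by (simp only: sum4 f0 f1 f2 f3)
  also have "\<dots> = u"
    by (subst ueq) (simp add: scaleR_add_right divide_inverse algebra_simps)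
  finally show ?thesis by simp
qed

lemma ns_not3:
  fixes T :: "real^4^4^4"
  assumes ns: "\<And>x y. x \<noteq> 0 \<Longrightarrow> y \<noteq> 0 \<Longrightarrow> mT T x y \<noteq> 0"
  shows "\<not> restricts_to_unit T 3"
proof
  assume "restricts_to_unit T 3"
  then obtain A B C where R: "restr_rel T 3 A B C" unfolding restricts_def' by blast
  define x where "x = rv A"
  define y where "y = rv B"
  define z where "z = rv C"
  have E: "mT T (x a) (y b) \<bullet> z c = (if a = b \<and> b = c then 1 else 0)" if "a<3" "b<3" "c<3" for a b c
    using restr_rel_m[OF R that] by (simp add: x_def y_def z_def)
  obtain c0 c1 c2 c3 c4 where c: "c0 \<noteq> 0 \<or> c1 \<noteq> 0 \<or> c2 \<noteq> 0 \<or> c3 \<noteq> 0 \<or> c4 \<noteq> 0"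
    "c0 *\<^sub>R mT T (x 0) (y 1) + c1 *\<^sub>R mT T (x 0) (y 2) + c2 *\<^sub>R mT T (x 0) (y 0)
      + c3 *\<^sub>R mT T (x 1) (y 1) + c4 *\<^sub>R mT T (x 2) (y 2) = 0"
    using dep5'[of "mT T (x 0) (y 1)" "mT T (x 0) (y 2)" "mT T (x 0) (y 0)" "mT T (x 1) (y 1)" "mT T (x 2) (y 2)"] by blast
  have dot: "c0 * (mT T (x 0) (y 1) \<bullet> z d) + c1 * (mT T (x 0) (y 2) \<bullet> z d) + c2 * (mT T (x 0) (y 0) \<bullet> z d)
      + c3 * (mT T (x 1) (y 1) \<bullet> z d) + c4 * (mT T (x 2) (y 2) \<bullet> z d) = 0" for d
    using arg_cong[OF c(2), of "\<lambda>v. v \<bullet> z d"] by (simp add: inner_add_left)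
  have "c2 = 0" using dot[of 0] by (simp add: E)
  moreover have "c3 = 0" using dot[of 1] by (simp add: E)
  moreover have "c4 = 0" using dot[of 2] by (simp add: E)
  ultimately have "c0 *\<^sub>R mT T (x 0) (y 1) + c1 *\<^sub>R mT T (x 0) (y 2) = 0" using c(2) by simp
  then have m0: "mT T (x 0) (c0 *\<^sub>R y 1 + c1 *\<^sub>R y 2) = 0"
    by (simp add: mT_add_right mT_scale_right)
  have "x 0 \<noteq> 0"
  proof
    assume "x 0 = 0" then show False using E[of 0 0 0] by simp
  qed
  then have yy: "c0 *\<^sub>R y 1 + c1 *\<^sub>R y 2 = 0" using ns m0 by blast
  have "c0 = mT T (x 1) (c0 *\<^sub>R y 1 + c1 *\<^sub>R y 2) \<bullet> z 1"
    by (simp add: mT_add_right mT_scale_right inner_add_left E)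
  then have "c0 = 0" using yy by simp
  moreover have "c1 = mT T (x 2) (c0 *\<^sub>R y 1 + c1 *\<^sub>R y 2) \<bullet> z 2"
    by (simp add: mT_add_right mT_scale_right inner_add_left E)
  then have "c1 = 0" using yy by simp
  ultimately show False using c(1) \<open>c2 = 0\<close> \<open>c3 = 0\<close> \<open>c4 = 0\<close> by simp
qed

lemma plane_not4:
  fixes T :: "real^4^4^4"
  assumes pl: "\<And>s t w. s \<noteq> 0 \<or> t \<noteq> 0 \<Longrightarrow> w \<noteq> 0 \<Longrightarrow> mT T (s *\<^sub>R p1 + t *\<^sub>R p2) w \<noteq> 0"
  shows "\<not> restricts_to_unit T 4"
proof
  assume "restricts_to_unit T 4"
  then obtain A B C where R: "restr_rel T 4 A B C" unfolding restricts_def' by blast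
  define x where "x = rv A"
  define y where "y = rv B"
  define z where "z = rv C"
  have E: "mT T (x a) (y b) \<bullet> z c = (if a = b \<and> b = c then 1 else 0)" if "a<4" "b<4" "c<4" for a b c
    using restr_rel_m[OF R that] by (simp add: x_def y_def z_def)
  define phi where "phi b u = mT T u (y b) \<bullet> z b" for b u
  have xspan: "u = (\<Sum>a<4. phi a u *\<^sub>R x a)" for u
    by (rule span4) (auto simp: phi_def linear_phi E)
  define psi where "psi c u = mT T (x c) (y c) \<bullet> u" for c u
  have zspan: "u = (\<Sum>a<4. psi a u *\<^sub>R z a)" for u
    by (rule span4) (auto simp: psi_def linear_psi E)
  have zperp: "u = 0" if "\<And>c. c < 4 \<Longrightarrow> u \<bullet> z c = 0" for u
  proof -
    have "u \<bullet> u = u \<bullet> (\<Sum>a<4. psi a u *\<^sub>R z a)" using zspan[of u] by simp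
    also have "\<dots> = 0" by (simp add: inner_sum_right that)
    finally show ?thesis by simp
  qed
  have philin: "phi 0 (s *\<^sub>R p1 + t *\<^sub>R p2) = s * phi 0 p1 + t * phi 0 p2" for s t
    by (simp add: phi_def mT_add_left mT_scale_left inner_add_left)
  obtain s t where st: "s \<noteq> 0 \<or> t \<noteq> 0" "phi 0 (s *\<^sub>R p1 + t *\<^sub>R p2) = 0"
  proof (cases "phi 0 p1 = 0 \<and> phi 0 p2 = 0")
    case True
    then show ?thesis using that[of 1 0] philin[of 1 0] by simp
  next
    case False
    then show ?thesis using that[of "phi 0 p2" "- phi 0 p1"] philin[of "phi 0 p2" "- phi 0 p1"]
      by (auto simp: algebra_simps)
  qed
  define xx where "xx = s *\<^sub>R p1 + t *\<^sub>R p2"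
  have "mT T xx (y 0) \<bullet> z c = 0" if "c < 4" for c
  proof -
    have "mT T xx (y 0) = (\<Sum>a<4. phi a xx *\<^sub>R mT T (x a) (y 0))"
      by (subst xspan[of xx]) (simp add: mT_sum_left mT_scale_left)
    then have "mT T xx (y 0) \<bullet> z c = (\<Sum>a<4. phi a xx * (mT T (x a) (y 0) \<bullet> z c))"
      by (simp add: inner_sum_left)
    also have "\<dots> = (\<Sum>a<(4::nat). if a = 0 \<and> c = 0 then phi 0 xx else 0)"
      by (rule sum.cong) (use that in \<open>auto simp: E\<close>)
    also have "\<dots> = 0" using st(2) unfolding xx_def[symmetric] by (intro sum.neutral) auto
    finally show ?thesis .
  qed
  then have "mT T xx (y 0) = 0" using zperp by blast
  moreover have "y 0 \<noteq> 0"
  proof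
    assume "y 0 = 0" then show False using E[of 0 0 0] by simp
  qed
  ultimately show False using pl[OF st(1)] by (simp add: xx_def)
qed


definition nT :: "real^'k::finite^'j::finite^'i::finite \<Rightarrow> real^'i \<Rightarrow> real^'k \<Rightarrow> real^'j" where
  "nT T x z = (\<chi> j. \<Sum>i\<in>UNIV. \<Sum>k\<in>UNIV. x$i * z$k * T$i$j$k)"

lemma mT_nT: "mT T x y \<bullet> z = nT T x z \<bullet> y"
proof -
  have "mT T x y \<bullet> z = (\<Sum>k\<in>UNIV. \<Sum>i\<in>UNIV. \<Sum>j\<in>UNIV. x$i * y$j * z$k * T$i$j$k)"
    unfolding mT_def inner_vec_def by (simp add: sum_distrib_left mult.commute mult.left_commute)
  also have "\<dots> = (\<Sum>i\<in>UNIV. \<Sum>k\<in>UNIV. \<Sum>j\<in>UNIV. x$i * y$j * z$k * T$i$j$k)"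
    by (rule sum.swap)
  also have "\<dots> = (\<Sum>i\<in>UNIV. \<Sum>j\<in>UNIV. \<Sum>k\<in>UNIV. x$i * y$j * z$k * T$i$j$k)"
    by (rule sum.cong[OF refl], rule sum.swap)
  also have "\<dots> = (\<Sum>j\<in>UNIV. \<Sum>i\<in>UNIV. \<Sum>k\<in>UNIV. x$i * y$j * z$k * T$i$j$k)"
    by (rule sum.swap)
  also have "\<dots> = nT T x z \<bullet> y"
    unfolding nT_def inner_vec_def by (simp add: sum_distrib_left mult.commute mult.left_commute)
  finally show ?thesis .
qed

definition Vmat :: "real^4^4^4 \<Rightarrow> real^4 \<Rightarrow> real^4 \<Rightarrow> real^4 \<Rightarrow> real^4 \<Rightarrow> real^4^4" where
  "Vmat T X0 X1 Z0 Z1 = (\<chi> r. if r = 1 then nT T X0 Z0 else if r = 2 then nT T X0 Z1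
      else if r = 3 then nT T X1 Z0 else nT T X1 Z1)"

lemma crit2:
  fixes T :: "real^4^4^4"
  assumes "invertible (Vmat T X0 X1 Z0 Z1)"
  shows "restricts_to_unit T 2"
proof -
  let ?V = "Vmat T X0 X1 Z0 Z1"
  obtain W where W: "?V ** W = mat 1" using assms unfolding invertible_def by blast
  define y0 where "y0 = W *v axis 1 1"
  define y1 where "y1 = W *v axis 4 1"
  have V0: "?V *v y0 = axis 1 1" unfolding y0_def by (simp add: matrix_vector_mul_assoc W)
  have V1: "?V *v y1 = axis 4 1" unfolding y1_def by (simp add: matrix_vector_mul_assoc W)
  have comp: "nT T X0 Z0 \<bullet> y = (?V *v y)$1" "nT T X0 Z1 \<bullet> y = (?V *v y)$2"
     "nT T X1 Z0 \<bullet> y = (?V *v y)$3" "nT T X1 Z1 \<bullet> y = (?V *v y)$4" for y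
    by (simp_all add: matrix_vector_mul_component Vmat_def)
  define A where "A a i = (if a = 0 then X0 else X1) $ i" for a :: nat and i :: 4
  define B where "B b j = (if b = 0 then y0 else y1) $ j" for b :: nat and j :: 4
  define C where "C c k = (if c = 0 then Z0 else Z1) $ k" for c :: nat and k :: 4
  have "restr_rel T 2 A B C"
    unfolding restr_rel_def
  proof (intro allI impI)
    fix a b c :: nat assume "a < 2" "b < 2" "c < 2"
    then have "a \<in> {0,1}" "b \<in> {0,1}" "c \<in> {0,1}" by auto
    then show "tensor_apply A B C T a b c = unit_tensor a b c"
      unfolding ta_eq mT_nT
      by (auto simp: rv_def A_def B_def C_def comp V0 V1 unit_tensor_def axis_def)
  qed
  then show ?thesis unfolding restricts_def' by blast
qed


lemma det_poly:
  fixes M :: "real^'n^'n"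
  shows "\<exists>P. \<forall>s. det (M + s *\<^sub>R mat 1) = poly P s"
proof -
  define P where "P = (\<Sum>p | p permutes (UNIV::'n set). smult (of_int (sign p))
      (\<Prod>i\<in>UNIV. [:M$i$p i, if p i = i then 1 else 0:]))"
  have "det (M + s *\<^sub>R mat 1) = poly P s" for s
    unfolding det_def P_def poly_sum poly_smult poly_prod
    by (intro sum.cong refl arg_cong[where f="\<lambda>x. _ * x"] prod.cong) (auto simp: mat_def)
  then show ?thesis by blast
qed

lemma large_inv:
  fixes M :: "real^'n^'n"
  assumes "s > (\<Sum>i\<in>UNIV. \<Sum>j\<in>UNIV. \<bar>M $ i $ j\<bar>)"
  shows "invertible (M + s *\<^sub>R mat 1)"
proof -
  have "w = 0" if w: "(M + s *\<^sub>R mat 1) *v w = 0" for w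
  proof (rule ccontr)
    assume "w \<noteq> 0"
    have "M *v w = - (s *\<^sub>R w)" using w
      by (simp add: matrix_vector_mult_add_rdistrib scaleR_matrix_vector_assoc[symmetric] eq_neg_iff_add_eq_0)
    moreover have "s > 0"
      using assms order_le_less_trans[OF sum_nonneg] by (metis (no_types, lifting) abs_ge_zero sum_nonneg)
    ultimately have "s * norm w = norm (M *v w)"
      by simp
    also have "\<dots> \<le> onorm ((*v) M) * norm w"
      by (rule onorm) (rule matrix_vector_mul_bounded_linear)
    also have "\<dots> \<le> (\<Sum>i\<in>UNIV. \<Sum>j\<in>UNIV. \<bar>M $ i $ j\<bar>) * norm w"
      by (rule mult_right_mono[OF onorm_le_matrix_component_sum]) simp
    finally show False using assms \<open>w \<noteq> 0\<close> by (simp add: mult_le_cancel_right)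
  qed
  then show ?thesis
    unfolding invertible_left_inverse matrix_left_invertible_ker by blast
qed

lemma dense_inv:
  fixes M :: "real^'n^'n"
  assumes "d > 0"
  shows "\<exists>s. 0 < s \<and> s < d \<and> invertible (M + s *\<^sub>R mat 1)"
proof -
  obtain P where P: "\<And>s. det (M + s *\<^sub>R mat 1) = poly P s" using det_poly by blast
  define s0 where "s0 = (\<Sum>i\<in>UNIV. \<Sum>j\<in>UNIV. \<bar>M $ i $ j\<bar>) + 1"
  have "invertible (M + s0 *\<^sub>R mat 1)" by (rule large_inv) (simp add: s0_def)
  then have "poly P s0 \<noteq> 0" using P invertible_det_nz by metis
  then have "P \<noteq> 0" by auto
  then have fin: "finite {s. poly P s = 0}" by (rule poly_roots_finite)
  have "infinite {0<..<d}" using assms by simp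
  then obtain s where "s \<in> {0<..<d}" "s \<notin> {s. poly P s = 0}"
    using fin by (meson finite_subset subsetI)
  then show ?thesis using P invertible_det_nz by (metis greaterThanLessThan_iff mem_Collect_eq)
qed


lemma sum_axis: "(\<Sum>i\<in>UNIV. axis a (1::real) $ i * f i) = f a"
  by (simp add: axis_def if_distrib[of "\<lambda>x. x * _"] cong: if_cong)

lemma nT_axis: "nT T (axis a 1) (axis c 1) = (\<chi> j. T $ a $ j $ c)"
  unfolding nT_def by (simp add: vec_eq_iff mult.assoc sum_distrib_left[symmetric] sum_axis)

definition Dpert :: "real^4^4^4" where
  "Dpert = (\<chi> i j k. if (i = 1 \<and> k = 1 \<and> j = 1) \<or> (i = 1 \<and> k = 2 \<and> j = 2)
     \<or> (i = 2 \<and> k = 1 \<and> j = 3) \<or> (i = 2 \<and> k = 2 \<and> j = 4) then 1 else 0)"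

abbreviation "Vstd T \<equiv> Vmat T (axis 1 1) (axis 2 1) (axis 1 1) (axis 2 1)"

lemma Vstd_pert: "Vstd (T + s *\<^sub>R Dpert) = Vstd T + s *\<^sub>R mat 1"
  unfolding Vmat_def nT_axis
  by (simp add: vec_eq_iff forall_4 Dpert_def mat_def)

lemma dense2:
  fixes T0 :: "real^4^4^4"
  assumes "e > 0"
  shows "\<exists>T. dist T T0 < e \<and> restricts_to_unit T 2"
proof -
  define d where "d = e / (norm Dpert + 1)"
  have "norm Dpert + 1 > 0" by (smt (verit) norm_ge_zero)
  then have "d > 0" using assms by (simp add: d_def)
  then obtain s where s: "0 < s" "s < d" "invertible (Vstd T0 + s *\<^sub>R mat 1)"
    using dense_inv by blast
  have "restricts_to_unit (T0 + s *\<^sub>R Dpert) 2"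
    by (rule crit2[of _ "axis 1 1" "axis 2 1" "axis 1 1" "axis 2 1"]) (use s(3) in \<open>simp add: Vstd_pert\<close>)
  moreover have "dist (T0 + s *\<^sub>R Dpert) T0 < e"
  proof -
    have "dist (T0 + s *\<^sub>R Dpert) T0 = s * norm Dpert" using s(1) by (simp add: dist_norm)
    also have "\<dots> \<le> d * norm Dpert" using s by (simp add: mult_right_mono)
    also have "\<dots> < e" using assms \<open>norm Dpert + 1 > 0\<close>
      by (simp add: d_def field_simps)
    finally show ?thesis .
  qed
  ultimately show ?thesis by blast
qed


lemma bounded_linear_axis: "bounded_linear (\<lambda>x::'b::real_normed_vector. axis i x :: 'b^'n::finite)"
proof (rule bounded_linear_intro[where K=1])
  show "axis i (x + y) = axis i x + axis i y" for x y :: 'b by (simp add: axis_def vec_eq_iff)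
  show "axis i (r *\<^sub>R x) = r *\<^sub>R axis i x" for r x by (simp add: axis_def vec_eq_iff)
  show "norm (axis i x) \<le> norm x * 1" for x :: 'b
  proof -
    have "norm (axis i x :: 'b^'n) = L2_set (\<lambda>j. norm ((axis i x :: 'b^'n) $ j)) UNIV"
      by (simp add: norm_vec_def)
    also have "\<dots> \<le> (\<Sum>j\<in>UNIV. norm ((axis i x :: 'b^'n) $ j))"
      by (rule L2_set_le_sum) simp
    also have "\<dots> = norm x" by (simp add: axis_def if_distrib cong: if_cong)
    finally show ?thesis by simp
  qed
qed

lemma vec_lambda_sum_axis: "(\<chi> i. g i) = (\<Sum>i\<in>UNIV. axis i (g i) :: 'b::comm_monoid_add^'n::finite)"
  by (simp add: vec_eq_iff axis_def sum_component if_distrib cong: if_cong)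

lemma hd_vec:
  fixes f :: "'a::real_normed_vector \<Rightarrow> 'n::finite \<Rightarrow> 'b::real_normed_vector"
  assumes "\<And>i. ((\<lambda>x. f x i) has_derivative (\<lambda>h. f' h i)) F"
  shows "((\<lambda>x. \<chi> i. f x i) has_derivative (\<lambda>h. \<chi> i. f' h i)) F"
proof -
  have "((\<lambda>x. \<Sum>i\<in>UNIV. axis i (f x i)) has_derivative (\<lambda>h. \<Sum>i\<in>UNIV. axis i (f' h i))) F"
    by (intro has_derivative_sum bounded_linear.has_derivative[OF bounded_linear_axis] assms)
  then show ?thesis by (simp only: vec_lambda_sum_axis[symmetric])
qed

lemma diff_vec:
  fixes f :: "'a::real_normed_vector \<Rightarrow> 'n::finite \<Rightarrow> 'b::real_normed_vector"
  assumes "\<And>i. (\<lambda>x. f x i) differentiable F"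
  shows "(\<lambda>x. \<chi> i. f x i) differentiable F"
proof -
  obtain f' where "\<And>i. ((\<lambda>x. f x i) has_derivative f' i) F"
    using assms unfolding differentiable_def by metis
  then show ?thesis unfolding differentiable_def using hd_vec[of f "\<lambda>h i. f' i h" F] by blast
qed

definition gmap :: "(real^4^4) \<times> (real^4^4) \<times> (real^4^4) \<Rightarrow> real^4^4^4" where
  "gmap p = (\<chi> i j k. \<Sum>l\<in>UNIV. fst p $ l $ i * fst (snd p) $ l $ j * snd (snd p) $ l $ k)"

lemmas has_derivative_vec_nth' [derivative_intros] = bounded_linear.has_derivative [OF bounded_linear_vec_nth]

lemma gmap_diff: "gmap differentiable_on UNIV"
  unfolding gmap_def differentiable_on_def
proof (intro ballI diff_vec)
  fix x :: "(real^4^4) \<times> (real^4^4) \<times> (real^4^4)" and i j k :: 4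
  show "(\<lambda>p. \<Sum>l\<in>UNIV. fst p $ l $ i * fst (snd p) $ l $ j * snd (snd p) $ l $ k) differentiable at x within UNIV"
  proof -
    have b1: "bounded_linear (\<lambda>p::(real^4^4) \<times> (real^4^4) \<times> (real^4^4). fst p $ l $ i)" for l i
      by (subst linear_conv_bounded_linear[symmetric], rule linearI) simp_all
    have b2: "bounded_linear (\<lambda>p::(real^4^4) \<times> (real^4^4) \<times> (real^4^4). fst (snd p) $ l $ i)" for l i
      by (subst linear_conv_bounded_linear[symmetric], rule linearI) simp_all
    have b3: "bounded_linear (\<lambda>p::(real^4^4) \<times> (real^4^4) \<times> (real^4^4). snd (snd p) $ l $ i)" for l i
      by (subst linear_conv_bounded_linear[symmetric], rule linearI) simp_all
    show ?thesis
      by (intro differentiable_sum ballI differentiable_mult bounded_linear_imp_differentiable b1 b2 b3) simp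
  qed
qed

lemma negl_gmap: "negligible (range gmap)"
  by (rule negligible_differentiable_image_lowdim[OF _ gmap_diff]) simp


lemma T_entry: "T$i$j$k = mT T (axis i 1) (axis j 1) \<bullet> axis k 1"
  unfolding mT_def by (simp add: inner_axis mult.assoc sum_distrib_left[symmetric] sum_axis)

lemma linear_beta: "linear (\<lambda>v. mT T x v \<bullet> z)"
  by (rule linearI) (simp_all add: mT_add_right mT_scale_right inner_add_left)

definition nat_of4 :: "4 \<Rightarrow> nat" where
  "nat_of4 l = (if l = 1 then 1 else if l = 2 then 2 else if l = 3 then 3 else 0)"

lemma sum_nat_of4: "(\<Sum>l\<in>UNIV. f (nat_of4 l)) = (\<Sum>n<4. f n)"
  by (simp add: sum_4 sum4 nat_of4_def add_ac)

lemma rank4: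
  fixes T :: "real^4^4^4"
  assumes "restricts_to_unit T 4"
  shows "T \<in> range gmap"
proof -
  obtain A B C where R: "restr_rel T 4 A B C" using assms unfolding restricts_def' by blast
  define x where "x = rv A"
  define y where "y = rv B"
  define z where "z = rv C"
  have E: "mT T (x a) (y b) \<bullet> z c = (if a = b \<and> b = c then 1 else 0)" if "a<4" "b<4" "c<4" for a b c
    using restr_rel_m[OF R that] by (simp add: x_def y_def z_def)
  define phi where "phi b u = mT T u (y b) \<bullet> z b" for b u
  have xspan: "(\<Sum>a<4. phi a u *\<^sub>R x a) = u" for u
    by (rule span4[symmetric]) (auto simp: phi_def linear_phi E)
  define bet where "bet b u = mT T (x b) u \<bullet> z b" for b u
  have yspan: "(\<Sum>a<4. bet a u *\<^sub>R y a) = u" for u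
    by (rule span4[symmetric]) (auto simp: bet_def linear_beta E)
  define psi where "psi c u = mT T (x c) (y c) \<bullet> u" for c u
  have zspan: "(\<Sum>a<4. psi a u *\<^sub>R z a) = u" for u
    by (rule span4[symmetric]) (auto simp: psi_def linear_psi E)
  have key: "mT T u v \<bullet> w = (\<Sum>l<4. phi l u * bet l v * psi l w)" for u v w
  proof -
    have "mT T u v \<bullet> w = mT T (\<Sum>a<4. phi a u *\<^sub>R x a) (\<Sum>b<4. bet b v *\<^sub>R y b) \<bullet> (\<Sum>c<4. psi c w *\<^sub>R z c)"
      by (simp only: xspan yspan zspan)
    also have "\<dots> = (\<Sum>l<4. phi l u * bet l v * psi l w)"
      by (simp add: mT_add_left mT_add_right mT_scale_left mT_scale_right inner_add_left inner_add_right sum4 E)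
    finally show ?thesis .
  qed
  define U :: "real^4^4" where "U = (\<chi> l i. phi (nat_of4 l) (axis i 1))"
  define V :: "real^4^4" where "V = (\<chi> l i. bet (nat_of4 l) (axis i 1))"
  define W :: "real^4^4" where "W = (\<chi> l i. psi (nat_of4 l) (axis i 1))"
  have "gmap (U, V, W) = T"
    unfolding gmap_def U_def V_def W_def
    by (simp add: vec_eq_iff sum_nat_of4[where f="\<lambda>n. phi n (axis _ 1) * bet n (axis _ 1) * psi n (axis _ 1)"]
        key[symmetric] T_entry[symmetric])
  then show ?thesis by (metis rangeI)
qed


lemma not_typ4: "\<not> typical_subrank TYPE(real^4^4^4) 4"
proof
  assume "typical_subrank TYPE(real^4^4^4) 4"
  then obtain U :: "(real^4^4^4) set" where U: "open U" "U \<noteq> {}" "\<forall>T\<in>U. subrank T = 4"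
    unfolding typical_subrank_def by blast
  have "U \<subseteq> range gmap"
  proof
    fix T assume "T \<in> U"
    then have "subrank T = 4" using U(3) by blast
    then show "T \<in> range gmap" using subrank_restricts[of T] rank4 by simp
  qed
  then have "negligible U" using negl_gmap negligible_subset by blast
  then show False using open_not_negligible[OF U(1,2)] by blast
qed

lemma not_typ_small:
  assumes "r < 2" shows "\<not> typical_subrank TYPE(real^4^4^4) r"
proof
  assume "typical_subrank TYPE(real^4^4^4) r"
  then obtain U :: "(real^4^4^4) set" where U: "open U" "U \<noteq> {}" "\<forall>T\<in>U. subrank T = r"
    unfolding typical_subrank_def by blast
  obtain T0 where "T0 \<in> U" using U(2) by blast
  then obtain e where e: "e > 0" "ball T0 e \<subseteq> U" using U(1) open_contains_ball by blast
  obtain T where T: "dist T T0 < e" "restricts_to_unit T 2" using dense2[OF e(1)] by blast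
  then have "T \<in> U" using e(2) by (auto simp: dist_commute)
  then have "subrank T = r" using U(3) by blast
  moreover have "2 \<le> subrank T" using subrank_ge[OF T(2)] .
  ultimately show False using assms by simp
qed

lemma typ_le4:
  assumes "typical_subrank TYPE(real^4^4^4) r" shows "r \<le> 4"
proof -
  obtain U :: "(real^4^4^4) set" where U: "open U" "U \<noteq> {}" "\<forall>T\<in>U. subrank T = r"
    using assms unfolding typical_subrank_def by blast
  obtain T where "T \<in> U" using U(2) by blast
  then have "subrank T = r" using U(3) by blast
  then show ?thesis using subrank_restricts[of T] restricts_le4[of T r] by simp
qed


definition qmul :: "real^4 \<Rightarrow> real^4 \<Rightarrow> real^4" where
  "qmul x y = (\<chi> c. if c = 1 then x$1*y$1 - x$2*y$2 - x$3*y$3 - x$4*y$4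
     else if c = 2 then x$1*y$2 + x$2*y$1 + x$3*y$4 - x$4*y$3
     else if c = 3 then x$1*y$3 - x$2*y$4 + x$3*y$1 + x$4*y$2
     else x$1*y$4 + x$2*y$3 - x$3*y$2 + x$4*y$1)"

definition qconj :: "real^4 \<Rightarrow> real^4" where
  "qconj x = (\<chi> c. if c = 1 then x$1 else - x$c)"

definition Hq :: "real^4^4^4" where
  "Hq = (\<chi> a b c. qmul (axis a 1) (axis b 1) $ c)"

lemma mT_Hq: "mT Hq x y = qmul x y"
  unfolding mT_def Hq_def
  by (simp add: vec_eq_iff forall_4 sum_4 qmul_def axis_def algebra_simps)

lemma qconj_mul: "qmul (qconj x) (qmul x y) = (x \<bullet> x) *\<^sub>R y"
  by (simp add: vec_eq_iff forall_4 qmul_def qconj_def inner_vec_def sum_4 algebra_simps)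

lemma qmul_0: "qmul z 0 = 0" by (simp add: qmul_def vec_eq_iff)

lemma Hq_ns: assumes "x \<noteq> 0" "y \<noteq> 0" shows "mT Hq x y \<noteq> 0"
proof
  assume "mT Hq x y = 0"
  then have "(x \<bullet> x) *\<^sub>R y = 0" using qconj_mul[of x y] by (simp add: mT_Hq qmul_0)
  then show False using assms by simp
qed

lemma tube_nz:
  fixes h :: "('a::topological_space \<times> 'b::topological_space) \<Rightarrow> 'c::real_normed_vector"
  assumes "continuous_on UNIV h" "compact K" "\<forall>k\<in>K. h (T0,k) \<noteq> 0"
  shows "\<exists>X. open X \<and> T0 \<in> X \<and> (\<forall>T\<in>X. \<forall>k\<in>K. h (T,k) \<noteq> 0)"
proof -
  have "open (h -` (- {0}))" by (rule open_vimage) (use assms in auto)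
  moreover have "{T0} \<times> K \<subseteq> h -` (- {0})" using assms(3) by auto
  ultimately obtain X where "T0 \<in> X" "open X" "X \<times> K \<subseteq> h -` (- {0})"
    using Elementary_Topology.tube_lemma[OF assms(2)] by metis
  then show ?thesis by blast
qed

lemma cont_mT: "continuous_on UNIV (\<lambda>p::(real^4^4^4) \<times> ((real^4) \<times> (real^4)). mT (fst p) (fst (snd p)) (snd (snd p)))"
  unfolding mT_def by (intro continuous_intros)

lemma ns_near_Hq: "\<exists>X. open X \<and> Hq \<in> X \<and> (\<forall>T\<in>X. \<forall>x y. x \<noteq> 0 \<longrightarrow> y \<noteq> 0 \<longrightarrow> mT T x y \<noteq> 0)"
proof -
  let ?K = "sphere (0::real^4) 1 \<times> sphere (0::real^4) 1"
  have "compact ?K" by (intro compact_Times compact_sphere)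
  moreover have "\<forall>k\<in>?K. mT (fst (Hq,k)) (fst (snd (Hq,k))) (snd (snd (Hq,k))) \<noteq> 0"
  proof
    fix k assume "k \<in> ?K"
    then have "fst k \<noteq> 0" "snd k \<noteq> 0" by auto
    then show "mT (fst (Hq,k)) (fst (snd (Hq,k))) (snd (snd (Hq,k))) \<noteq> 0" using Hq_ns by simp
  qed
  ultimately obtain X where X: "open X" "Hq \<in> X"
      "\<forall>T\<in>X. \<forall>k\<in>?K. mT (fst (T,k)) (fst (snd (T,k))) (snd (snd (T,k))) \<noteq> 0"
    using tube_nz[OF cont_mT] by blast
  have "mT T x y \<noteq> 0" if "T \<in> X" "x \<noteq> 0" "y \<noteq> 0" for T x y
  proof -
    have "mT T (x /\<^sub>R norm x) (y /\<^sub>R norm y) \<noteq> 0"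
      using X(3) that by auto
    then show ?thesis by (simp add: mT_scale_left mT_scale_right)
  qed
  then show ?thesis using X by blast
qed

definition VH :: "real^4^4" where "VH = Vmat Hq (axis 1 1) (axis 2 1) (axis 1 1) (axis 3 1)"

lemma VH_inv: "invertible VH"
  unfolding invertible_left_inverse
proof (intro exI)
  show "transpose VH ** VH = mat 1"
    unfolding VH_def Vmat_def nT_axis Hq_def
    by (simp add: vec_eq_iff forall_4 sum_4 matrix_matrix_mult_def transpose_def mat_def qmul_def axis_def)
qed

lemma cont_det: "continuous_on UNIV (\<lambda>T. det (Vmat T X0 X1 Z0 Z1))"
proof -
  have "continuous_on UNIV (\<lambda>T. Vmat T X0 X1 Z0 Z1 $ i $ j)" for i j
    unfolding Vmat_def nT_def by (cases "i = 1"; cases "i = 2"; cases "i = 3") (simp_all; intro continuous_intros)+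
  then show ?thesis unfolding det_def
    by (intro continuous_on_sum continuous_on_mult[OF continuous_on_const] continuous_on_prod) auto
qed


lemma typ2: "typical_subrank TYPE(real^4^4^4) 2"
proof -
  obtain X where X: "open X" "Hq \<in> X" "\<forall>T\<in>X. \<forall>x y. x \<noteq> 0 \<longrightarrow> y \<noteq> 0 \<longrightarrow> mT T x y \<noteq> 0"
    using ns_near_Hq by blast
  define f where "f T = det (Vmat T (axis 1 1) (axis 2 1) (axis 1 1) (axis 3 1))" for T
  define U where "U = X \<inter> f -` (- {0})"
  have "open U" unfolding U_def f_def
    by (intro open_Int X(1) open_vimage cont_det) auto
  moreover have "Hq \<in> U" using X(2) VH_inv unfolding U_def f_def VH_def by (simp add: invertible_det_nz)
  moreover have "subrank T = 2" if "T \<in> U" for T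
  proof (rule subrank_eqI)
    show "restricts_to_unit T 2"
      using that by (intro crit2[of _ "axis 1 1" "axis 2 1" "axis 1 1" "axis 3 1"]) (simp add: U_def f_def invertible_det_nz)
    show "\<not> restricts_to_unit T (Suc 2)"
      using ns_not3[of T] X(3) that unfolding U_def by (simp add: numeral_eq_Suc)
  qed
  ultimately show ?thesis unfolding typical_subrank_def by blast
qed


definition s4 :: "4 \<Rightarrow> 4" where "s4 j = (if j = 1 then 2 else if j = 2 then 3 else 1)"

definition t1 :: "4 \<Rightarrow> 4 \<Rightarrow> 4 \<Rightarrow> real" where
  "t1 i j k = (if i \<noteq> 4 \<and> j \<noteq> 4 \<and> k \<noteq> 4 then (if i = j \<and> j = k then 1 else 0)
    else if i = 4 \<and> j \<noteq> 4 \<and> k \<noteq> 4 then (if k = s4 j then 1 else 0)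
    else if i \<noteq> 4 \<and> j = 4 \<and> k \<noteq> 4 then (if k = s4 i then 1 else if k = s4 (s4 i) then -1 else 0)
    else if i \<noteq> 4 \<and> j \<noteq> 4 \<and> k = 4 then 0
    else if i \<noteq> 4 \<and> j = 4 \<and> k = 4 then (if i = 1 then 1 else 0)
    else if i = 4 \<and> j \<noteq> 4 \<and> k = 4 then (if j = 1 then 1 else 0)
    else if i = 4 \<and> j = 4 \<and> k \<noteq> 4 then (if k = 1 then -2 else -1)
    else 0)"

definition T1 :: "real^4^4^4" where "T1 = (\<chi> i j k. t1 i j k)"

definition NTv :: "real^4 \<Rightarrow> real^4" where "NTv v = (\<chi> k. \<Sum>j\<in>UNIV. v$j * t1 4 j k)"

definition qv :: "real^4" where "qv = axis 1 1 + axis 2 1 + axis 3 1"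

lemma mT_T1_plane: "mT T1 (s *\<^sub>R qv + t *\<^sub>R axis 4 1) w = s *\<^sub>R w + t *\<^sub>R NTv w"
  unfolding mT_def T1_def NTv_def qv_def
  by (simp add: vec_eq_iff forall_4 sum_4 axis_def t1_def s4_def algebra_simps)

lemma L_identity:
  assumes "v = s *\<^sub>R w + t *\<^sub>R NTv w"
  shows "s *\<^sub>R ((s^2 + 2*t^2) *\<^sub>R v + t^2 *\<^sub>R NTv (NTv v)) - t *\<^sub>R NTv ((s^2 + 2*t^2) *\<^sub>R v + t^2 *\<^sub>R NTv (NTv v))
     = ((s^2 + t^2)^2) *\<^sub>R w"
  unfolding assms NTv_def
  by (simp add: vec_eq_iff forall_4 sum_4 t1_def s4_def algebra_simps power2_eq_square)

lemma NTv_0[simp]: "NTv 0 = 0" by (simp add: NTv_def vec_eq_iff)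

lemma T1_plane_nz:
  assumes "s \<noteq> 0 \<or> t \<noteq> 0" "w \<noteq> 0"
  shows "mT T1 (s *\<^sub>R qv + t *\<^sub>R axis 4 1) w \<noteq> 0"
proof
  assume "mT T1 (s *\<^sub>R qv + t *\<^sub>R axis 4 1) w = 0"
  then have "0 = s *\<^sub>R w + t *\<^sub>R NTv w" by (simp add: mT_T1_plane)
  from L_identity[OF this] have "((s^2 + t^2)^2) *\<^sub>R w = 0" by simp
  moreover have "s^2 + t^2 > 0" using assms(1) by (auto simp: add_pos_nonneg add_nonneg_pos)
  ultimately show False using assms(2) by (metis power_not_zero scaleR_eq_0_iff less_irrefl)
qed


lemma plane_near_T1: "\<exists>X. open X \<and> T1 \<in> X \<and> (\<forall>T\<in>X. \<forall>s t w. (s \<noteq> 0 \<or> t \<noteq> 0) \<longrightarrow> w \<noteq> 0 \<longrightarrow>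
    mT T (s *\<^sub>R qv + t *\<^sub>R axis 4 1) w \<noteq> 0)"
proof -
  let ?K = "sphere (0::real \<times> real) 1 \<times> sphere (0::real^4) 1"
  define h where "h p = mT (fst p) (fst (fst (snd p)) *\<^sub>R qv + snd (fst (snd p)) *\<^sub>R axis 4 1) (snd (snd p))"
    for p :: "(real^4^4^4) \<times> ((real \<times> real) \<times> (real^4))"
  have c1: "continuous_on UNIV h" unfolding h_def mT_def by (intro continuous_intros)
  have c2: "compact ?K" by (intro compact_Times compact_sphere)
  have c3: "\<forall>k\<in>?K. h (T1,k) \<noteq> 0"
  proof
    fix k assume "k \<in> ?K"
    then have "fst k \<noteq> 0" "snd k \<noteq> 0" by auto
    then have "fst (fst k) \<noteq> 0 \<or> snd (fst k) \<noteq> 0" by (metis prod.collapse zero_prod_def)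
    then show "h (T1,k) \<noteq> 0" unfolding h_def using T1_plane_nz \<open>snd k \<noteq> 0\<close> by simp
  qed
  obtain X where X: "open X" "T1 \<in> X" "\<forall>T\<in>X. \<forall>k\<in>?K. h (T,k) \<noteq> 0"
    using tube_nz[OF c1 c2 c3] by blast
  have "mT T (s *\<^sub>R qv + t *\<^sub>R axis 4 1) w \<noteq> 0" if "T \<in> X" "s \<noteq> 0 \<or> t \<noteq> 0" "w \<noteq> 0" for T s t w
  proof -
    define n where "n = norm (s,t)"
    have "(s,t) \<noteq> 0" using that(2) by (auto simp: zero_prod_def)
    then have n: "n > 0" by (simp add: n_def)
    have "norm (s/n, t/n) = 1"
    proof -
      have eq: "(s/n, t/n) = (1/n) *\<^sub>R (s,t)" by (simp add: divide_inverse mult.commute)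
      have "norm ((1/n) *\<^sub>R (s,t)) = \<bar>1/n\<bar> * norm (s,t)" by (rule norm_scaleR)
      also have "\<dots> = 1" using n by (simp add: n_def[symmetric])
      finally have "norm ((1/n) *\<^sub>R (s,t)) = 1" .
      then show ?thesis by (simp only: eq)
    qed
    then have "((s/n, t/n), w /\<^sub>R norm w) \<in> ?K" using that(3) by simp
    then have "h (T, ((s/n, t/n), w /\<^sub>R norm w)) \<noteq> 0" using X(3) that(1) by blast
    then have "mT T ((1/n) *\<^sub>R (s *\<^sub>R qv + t *\<^sub>R axis 4 1)) (w /\<^sub>R norm w) \<noteq> 0"
      unfolding h_def by (simp add: scaleR_add_right divide_inverse mult.commute)
    then show ?thesis by (simp add: mT_scale_left mT_scale_right)
  qed
  then show ?thesis using X(1,2) by blast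
qed


definition e34 :: "3 \<Rightarrow> 4" where "e34 a = (if a = 1 then 1 else if a = 2 then 2 else 3)"
definition p43 :: "4 \<Rightarrow> 3" where "p43 i = (if i = 1 then 1 else if i = 2 then 2 else 3)"
definition Pi3 :: "real^4^3" where "Pi3 = (\<chi> a. axis (e34 a) 1)"
definition I3 :: "real^3^3^3" where "I3 = (\<chi> a b c. if a = b \<and> b = c then 1 else 0)"

definition Fm :: "real^4^3 \<Rightarrow> real^4^3 \<Rightarrow> real^4^3 \<Rightarrow> real^4^4^4 \<Rightarrow> real^3^3^3" where
  "Fm A B C T = (\<chi> a b c. \<Sum>i\<in>UNIV. \<Sum>j\<in>UNIV. \<Sum>k\<in>UNIV. A$a$i * B$b$j * C$c$k * T$i$j$k)"

type_synonym pt = "((real^4^3) \<times> (real^4^3) \<times> (real^4^3)) \<times> (real^4^4^4)"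

definition Gm :: "pt \<Rightarrow> (real^3^3^3) \<times> (real^4^4^4)" where
  "Gm x = (Fm (fst (fst x)) (fst (snd (fst x))) (snd (snd (fst x))) (snd x), snd x)"

definition DF :: "pt \<Rightarrow> pt \<Rightarrow> real^3^3^3" where
  "DF x h = (\<chi> a b c. \<Sum>i\<in>UNIV. \<Sum>j\<in>UNIV. \<Sum>k\<in>UNIV.
     fst (fst h) $a$i * fst (snd (fst x)) $b$j * snd (snd (fst x)) $c$k * snd x $i$j$k
   + fst (fst x) $a$i * fst (snd (fst h)) $b$j * snd (snd (fst x)) $c$k * snd x $i$j$k
   + fst (fst x) $a$i * fst (snd (fst x)) $b$j * snd (snd (fst h)) $c$k * snd x $i$j$k
   + fst (fst x) $a$i * fst (snd (fst x)) $b$j * snd (snd (fst x)) $c$k * snd h $i$j$k)"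

lemma Fm_deriv: "((\<lambda>x. Fm (fst (fst x)) (fst (snd (fst x))) (snd (snd (fst x))) (snd x)) has_derivative DF x0) (at x0)"
  unfolding Fm_def DF_def
  apply (intro hd_vec)
  apply (auto intro!: derivative_eq_intros simp: algebra_simps sum.distrib)
  done

definition x0 :: pt where "x0 = ((Pi3, (Pi3, Pi3)), T1)"

lemma sel1: "(\<Sum>i\<in>UNIV. \<Sum>j\<in>UNIV. \<Sum>k\<in>UNIV. X i * axis b 1 $ j * axis c 1 $ k * f i j k) = (\<Sum>i\<in>UNIV. X i * f i b c)"
  for X :: "4 \<Rightarrow> real"
  by (simp add: sum_distrib_left[symmetric] mult.assoc sum_axis)
lemma sel2: "(\<Sum>i\<in>UNIV. \<Sum>j\<in>UNIV. \<Sum>k\<in>UNIV. axis a 1 $ i * X j * axis c 1 $ k * f i j k) = (\<Sum>j\<in>UNIV. X j * f a j c)"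
  for X :: "4 \<Rightarrow> real"
  by (simp add: sum_distrib_left[symmetric] mult.assoc mult.left_commute[of "X _"] sum_axis)
lemma sel3: "(\<Sum>i\<in>UNIV. \<Sum>j\<in>UNIV. \<Sum>k\<in>UNIV. axis a 1 $ i * axis b 1 $ j * X k * f i j k) = (\<Sum>k\<in>UNIV. X k * f a b k)"
  for X :: "4 \<Rightarrow> real"
  by (simp add: sum_distrib_left[symmetric] mult.assoc mult.left_commute[of "X _"] sum_axis)
lemma sel4: "(\<Sum>i\<in>UNIV. \<Sum>j\<in>UNIV. \<Sum>k\<in>UNIV. axis a 1 $ i * axis b 1 $ j * axis c 1 $ k * (f i j k::real)) = f a b c"
  by (simp add: sum_distrib_left[symmetric] mult.assoc sum_axis)

lemma DF0: "DF x0 ((dA,(dB,dC)),dT) $a$b$c =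
   (\<Sum>i\<in>UNIV. dA$a$i * t1 i (e34 b) (e34 c)) + (\<Sum>j\<in>UNIV. dB$b$j * t1 (e34 a) j (e34 c))
   + (\<Sum>k\<in>UNIV. dC$c$k * t1 (e34 a) (e34 b) k) + dT$(e34 a)$(e34 b)$(e34 c)"
  unfolding DF_def x0_def
  by (simp add: sum.distrib Pi3_def T1_def sel1 sel2 sel3 sel4 sum_axis)

definition rr :: "real^3^3^3 \<Rightarrow> real^4^4^4 \<Rightarrow> real^3^3^3" where
  "rr w dT = (\<chi> a b c. w$a$b$c - dT$(e34 a)$(e34 b)$(e34 c))"
definition betf :: "real^3^3^3 \<Rightarrow> 3 \<Rightarrow> real" where "betf r b = r$(b+1)$b$(b+2)"
definition alf :: "real^3^3^3 \<Rightarrow> 3 \<Rightarrow> real" where "alf r a = r$a$(a+1)$(a+2) + betf r (a+1)"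
definition dAf :: "real^3^3^3 \<Rightarrow> real^4^3" where
  "dAf r = (\<chi> a i. if i = 4 then alf r a else
     r$a$(p43 i)$(p43 i) - (if p43 i = a+1 then betf r (a+1) else if p43 i = a+2 then - betf r (a+2) else 0))"
definition dBf :: "real^3^3^3 \<Rightarrow> real^4^3" where
  "dBf r = (\<chi> b i. if i = 4 then betf r b else
     (if p43 i = b then 0 else r$(p43 i)$b$(p43 i) - (if b = p43 i + 2 then alf r (p43 i) else 0)))"
definition dCf :: "real^3^3^3 \<Rightarrow> real^4^3" where
  "dCf r = (\<chi> c i. if i = 4 then 0 else
     (if p43 i = c then 0 else r$(p43 i)$(p43 i)$c -
        (if c = p43 i + 1 then alf r (p43 i) + betf r (p43 i) else if c = p43 i + 2 then - betf r (p43 i) else 0)))"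

lemma num3: "(4::3) = 1" "(5::3) = 2" "(6::3) = 3" "(7::3) = 1" "(8::3) = 2" by simp_all

lemma key_r: "(\<Sum>i\<in>UNIV. dAf r $a$i * t1 i (e34 b) (e34 c)) + (\<Sum>j\<in>UNIV. dBf r $b$j * t1 (e34 a) j (e34 c))
   + (\<Sum>k\<in>UNIV. dCf r $c$k * t1 (e34 a) (e34 b) k) = r$a$b$c"
  apply (insert exhaust_3[of a] exhaust_3[of b] exhaust_3[of c])
  apply (elim disjE)
  apply (simp_all add: sum_4 dAf_def dBf_def dCf_def alf_def betf_def t1_def e34_def p43_def s4_def num3)
  done

definition gp :: "(real^3^3^3) \<times> (real^4^4^4) \<Rightarrow> pt" where
  "gp y = ((dAf (rr (fst y) (snd y)), (dBf (rr (fst y) (snd y)), dCf (rr (fst y) (snd y)))), snd y)"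

lemma DF_gp: "DF x0 (gp y) = fst y"
  unfolding gp_def
  by (simp add: vec_eq_iff DF0 key_r rr_def)

lemma comp_id: "(\<lambda>h. (DF x0 h, snd h)) \<circ> gp = id"
  by (rule ext) (simp add: DF_gp, simp add: gp_def)

lemma rr_add: "rr (w + w') (d + d') = rr w d + rr w' d'" by (simp add: rr_def vec_eq_iff)
lemma rr_scale: "rr (c *\<^sub>R w) (c *\<^sub>R d) = c *\<^sub>R rr w d" by (simp add: rr_def vec_eq_iff algebra_simps)
lemma dAf_add: "dAf (r + r') = dAf r + dAf r'" by (simp add: dAf_def alf_def betf_def vec_eq_iff)
lemma dAf_scale: "dAf (c *\<^sub>R r) = c *\<^sub>R dAf r" by (simp add: dAf_def alf_def betf_def vec_eq_iff algebra_simps)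
lemma dBf_add: "dBf (r + r') = dBf r + dBf r'" by (simp add: dBf_def alf_def betf_def vec_eq_iff)
lemma dBf_scale: "dBf (c *\<^sub>R r) = c *\<^sub>R dBf r" by (simp add: dBf_def alf_def betf_def vec_eq_iff algebra_simps)
lemma dCf_add: "dCf (r + r') = dCf r + dCf r'" by (simp add: dCf_def alf_def betf_def vec_eq_iff)
lemma dCf_scale: "dCf (c *\<^sub>R r) = c *\<^sub>R dCf r" by (simp add: dCf_def alf_def betf_def vec_eq_iff algebra_simps)

lemma gp_bl: "bounded_linear gp"
proof -
  have "linear gp"
  proof (rule linearI)
    fix y y' :: "(real^3^3^3) \<times> (real^4^4^4)"
    show "gp (y + y') = gp y + gp y'"
      unfolding gp_def by (simp add: rr_add dAf_add dBf_add dCf_add)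
  next
    fix c and y :: "(real^3^3^3) \<times> (real^4^4^4)"
    show "gp (c *\<^sub>R y) = c *\<^sub>R gp y"
      unfolding gp_def by (simp add: rr_scale dAf_scale dBf_scale dCf_scale)
  qed
  then show ?thesis by (simp add: linear_conv_bounded_linear)
qed

lemma Gm_cont: "continuous_on UNIV Gm"
  unfolding Gm_def Fm_def by (intro continuous_intros)

lemma Gm_deriv: "(Gm has_derivative (\<lambda>h. (DF x0 h, snd h))) (at x0)"
  unfolding Gm_def[abs_def] by (intro has_derivative_Pair Fm_deriv has_derivative_snd has_derivative_ident)

lemma Gm_x0: "Gm x0 = (I3, T1)"
proof -
  have "Fm Pi3 Pi3 Pi3 T1 = I3"
    unfolding Fm_def Pi3_def T1_def I3_def
    apply (simp add: vec_eq_iff sel4)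
    apply (intro allI)
    subgoal for a b c
      apply (insert exhaust_3[of a] exhaust_3[of b] exhaust_3[of c])
      apply (elim disjE)
      apply (simp_all add: t1_def e34_def)
      done
    done
  then show ?thesis by (simp add: Gm_def x0_def)
qed

lemma near_T1_restr3: "\<exists>e>0. \<forall>T. dist T T1 < e \<longrightarrow> restricts_to_unit T 3"
proof -
  have "Gm x0 \<in> interior (Gm ` UNIV)"
    by (rule sussmann_open_mapping[OF open_UNIV Gm_cont UNIV_I Gm_deriv gp_bl comp_id subset_refl]) simp
  then obtain e where e: "e > 0" "ball (I3, T1) e \<subseteq> range Gm"
    unfolding Gm_x0 mem_interior by blast
  have "restricts_to_unit T 3" if "dist T T1 < e" for T
  proof -
    have "(I3, T) \<in> ball (I3, T1) e" using that by (simp add: dist_Pair_Pair dist_commute)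
    then obtain x where "Gm x = (I3, T)" using e(2) by (metis imageE subsetD)
    then have Fx: "Fm (fst (fst x)) (fst (snd (fst x))) (snd (snd (fst x))) T = I3"
      by (auto simp: Gm_def)
    define A where "A a i = fst (fst x) $ (of_nat a) $ i" for a :: nat and i :: 4
    define B where "B a i = fst (snd (fst x)) $ (of_nat a) $ i" for a :: nat and i :: 4
    define C where "C a i = snd (snd (fst x)) $ (of_nat a) $ i" for a :: nat and i :: 4
    have "restr_rel T 3 A B C"
      unfolding restr_rel_def
    proof (intro allI impI)
      fix a b c :: nat assume abc: "a < 3" "b < 3" "c < 3"
      have "tensor_apply A B C T a b c = Fm (fst (fst x)) (fst (snd (fst x))) (snd (snd (fst x))) T $ of_nat a $ of_nat b $ of_nat c"
        unfolding tensor_apply_def Fm_def A_def B_def C_def by simp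
      also have "\<dots> = I3 $ of_nat a $ of_nat b $ of_nat c" by (simp add: Fx)
      also have "\<dots> = unit_tensor a b c"
        using abc unfolding I3_def unit_tensor_def
        by (auto simp: less_Suc_eq numeral_eq_Suc)
      finally show "tensor_apply A B C T a b c = unit_tensor a b c" .
    qed
    then show ?thesis unfolding restricts_def' by blast
  qed
  then show ?thesis using e(1) by blast
qed

lemma typ3: "typical_subrank TYPE(real^4^4^4) 3"
proof -
  obtain X where X: "open X" "T1 \<in> X" "\<forall>T\<in>X. \<forall>s t w. (s \<noteq> 0 \<or> t \<noteq> 0) \<longrightarrow> w \<noteq> 0 \<longrightarrow>
    mT T (s *\<^sub>R qv + t *\<^sub>R axis 4 1) w \<noteq> 0"
    using plane_near_T1 by blast
  obtain e where e: "e > 0" "\<forall>T. dist T T1 < e \<longrightarrow> restricts_to_unit T 3"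
    using near_T1_restr3 by blast
  define U where "U = X \<inter> ball T1 e"
  have "open U" unfolding U_def using X(1) by blast
  moreover have "T1 \<in> U" unfolding U_def using X(2) e(1) by simp
  moreover have "subrank T = 3" if "T \<in> U" for T
  proof (rule subrank_eqI)
    show "restricts_to_unit T 3" using that e(2) unfolding U_def by (simp add: dist_commute)
    have "\<not> restricts_to_unit T 4"
      by (rule plane_not4[of T qv "axis 4 1"]) (use that X(3) in \<open>auto simp: U_def\<close>)
    then show "\<not> restricts_to_unit T (Suc 3)" by (simp add: numeral_eq_Suc)
  qed
  ultimately show ?thesis unfolding typical_subrank_def by blast
qed

theorem theorem4p13:
  shows "{r. typical_subrank TYPE(real^4^4^4) r} = {2, 3}"
proof
  show "{r. typical_subrank TYPE(real^4^4^4) r} \<subseteq> {2, 3}"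
  proof
    fix r assume "r \<in> {r. typical_subrank TYPE(real^4^4^4) r}"
    then have t: "typical_subrank TYPE(real^4^4^4) r" by simp
    then have "r \<le> 4" "r \<noteq> 4" "\<not> r < 2"
      using typ_le4 not_typ4 not_typ_small by blast+
    then show "r \<in> {2, 3}" by auto
  qed
  show "{2, 3} \<subseteq> {r. typical_subrank TYPE(real^4^4^4) r}"
    using typ2 typ3 by auto
qed


end
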